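(* Let $L=(T,V,E)$ be a link stream (as defined in the context) with $m=|E|>0$, let $\mathcal{C}$ be a dynamic community structure on $L$, let $\lfloor \mathcal{C} \rfloor=\{\lfloor C\rfloor\}_{C\in\mathcal{C}}$ be its trimmed version, and let $\omega>0$. Then $$Q_{\star}(L,\lfloor \mathcal{C}\rfloor,\omega)\ \ge\ Q_{\star}(L,\mathcal{C},\omega),$$ for $\star = JM$ and for $\star = MM$, where $Q_\star$ denotes Longitudinal Modularity as defined in the context.
   Context: A link stream is a triple $L=(T,V,E)$ where $T\subset\mathbb{R}$ is a finite (discrete) set of time instants, $V$ is a finite set of nodes, and $E\subseteq \{(uv,t): u,v\in V,\ t\in T\}$ is a finite set of instantaneous, undirected, unweighted interactions. Write $uv_t=1$ if $(uv,t)\in E$ and $0$ otherwise; for $T'\subseteq T$ put $L_{uv,T'}=\sum_{t\in T'} uv_t$, $L_{uv}=L_{uv,T}$, $k_u=\sum_{v\in V}L_{uv}$ (degree), and $m=\sum_{u\in V}k_u/2=|E|$. A time node is a pair $ut\in V\times T$. A dynamic community structure $\mathcal{C}$ is a collection of non-empty, pairwise disjoint communities, each community $C$ being a set of time nodes. For a community $C$ and node $u$: $T_{u\in C}=\{t\in T: ut\in C\}$; $T_C=\bigcup_{u\in V}T_{u\in C}$; $L_{uv\in C}=L_{uv,\,T_{u\in C}\cap T_{v\in C}}$. For a node $u$, $\eta_u(\mathcal{C})$ (community switch count) is the number of communities of $\mathcal{C}$ visited by $u$, minus one. Expectations: $\mathbb{E}_{JM}[L_{uv\in C}]=\frac{k_uk_v}{2m}\frac{|T_C|}{|T|}\mathbb{1}_{|T_{u\in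 C}||T_{v\in C}|>0}$, and $\mathbb{E}_{MM}[L_{uv\in C}]=\frac{k_uk_v}{2m}\frac{\sqrt{|T_{u\in C}||T_{v\in C}|}}{|T|}$. Longitudinal Modularity, for $\star\in\{JM,MM\}$: $$Q_\star(L,\mathcal{C},\omega)=\frac{1}{2m}\sum_{C\in\mathcal{C}}\sum_{(u,v)\in V^2}\big[L_{uv\in C}-\mathbb{E}_\star[L_{uv\in C}]\big]-\frac{\omega}{2m}\sum_{u\in V}\eta_u(\mathcal{C}).$$ Active time nodes: $A=\{ut\in V\times T:\exists v\in V,\ (uv,t)\in E\}$; $T_{u\in C\cap A}=\{t: ut\in C\cap A\}$. The trimmed existence time of $u$ in $C$ is $\lfloor T_{u\in C}\rfloor = T_{u\in C}\cap[\min T_{u\in C\cap A},\ \max T_{u\in C\cap A}]$ (the smallest subset of $T_{u\in C}$ containing all time instants between the first and last instant at which $u$ is active within $C$; empty if $u$ is never active within $C$). The trimmed existence time of $C$ is $\lfloor T_C\rfloor=\bigcup_u\lfloor T_{u\in C}\rfloor$, the trimmed community is $\lfloor C\rfloor=\bigcup_{u\in V}\{u\}\times\lfloor T_{u\in C}\rfloor$, and $\lfloor\mathcal{C}\rfloor=\{\lfloor C\rfloor\}_{C\in\mathcal{C}}$, with $Q_\star(L,\lfloor\mathcal{C}\rfloor,\omega)$ computed by the same formula. *)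

theory Defs
  imports Complex_Main
begin

text \<open>Link streams. An interaction (uv,t) is represented as the pair of the
unordered pair {u,v} (a set) and the time instant t.\<close>

definition link_stream :: "real set \<Rightarrow> 'v set \<Rightarrow> ('v set \<times> real) set \<Rightarrow> bool" where
  "link_stream T V E \<longleftrightarrow> finite T \<and> finite V \<and>
     E \<subseteq> {({u, v}, t) | u v t. u \<in> V \<and> v \<in> V \<and> t \<in> T}"

definition ind :: "('v set \<times> real) set \<Rightarrow> 'v \<Rightarrow> 'v \<Rightarrow> real \<Rightarrow> real" where
  "ind E u v t = (if ({u, v}, t) \<in> E then 1 else 0)"

definition Lw :: "('v set \<times> real) set \<Rightarrow> 'v \<Rightarrow> 'v \<Rightarrow> real set \<Rightarrow> real" where
  "Lw E u v T' = (\<Sum>t\<in>T'. ind E u v t)"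

definition deg :: "real set \<Rightarrow> 'v set \<Rightarrow> ('v set \<times> real) set \<Rightarrow> 'v \<Rightarrow> real" where
  "deg T V E u = (\<Sum>v\<in>V. Lw E u v T)"

definition mE :: "('v set \<times> real) set \<Rightarrow> real" where
  "mE E = real (card E)"

definition dyn_comm_structure :: "real set \<Rightarrow> 'v set \<Rightarrow> ('v \<times> real) set set \<Rightarrow> bool" where
  "dyn_comm_structure T V \<C> \<longleftrightarrow>
     (\<forall>C\<in>\<C>. C \<noteq> {} \<and> C \<subseteq> V \<times> T) \<and>
     (\<forall>C1\<in>\<C>. \<forall>C2\<in>\<C>. C1 \<noteq> C2 \<longrightarrow> C1 \<inter> C2 = {})"

definition T_in :: "'v \<Rightarrow> ('v \<times> real) set \<Rightarrow> real set" where
  "T_in u C = {t. (u, t) \<in> C}"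

definition T_comm :: "'v set \<Rightarrow> ('v \<times> real) set \<Rightarrow> real set" where
  "T_comm V C = (\<Union>u\<in>V. T_in u C)"

definition L_in :: "('v set \<times> real) set \<Rightarrow> 'v \<Rightarrow> 'v \<Rightarrow> ('v \<times> real) set \<Rightarrow> real" where
  "L_in E u v C = Lw E u v (T_in u C \<inter> T_in v C)"

text \<open>community switch count eta_u: number of visited communities minus one
  (truncated at 0 for a node visiting no community)\<close>
definition eta :: "('v \<times> real) set set \<Rightarrow> 'v \<Rightarrow> nat" where
  "eta \<C> u = card {C \<in> \<C>. \<exists>t. (u, t) \<in> C} - 1"

datatype null_model = JM | MM

definition expect :: "null_model \<Rightarrow> real set \<Rightarrow> 'v set \<Rightarrow> ('v set \<times> real) set
                       \<Rightarrow> 'v \<Rightarrow> 'v \<Rightarrow> ('v \<times> real) set \<Rightarrow> real" where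
  "expect M T V E u v C =
     (case M of
        JM \<Rightarrow> deg T V E u * deg T V E v / (2 * mE E) * (real (card (T_comm V C)) / real (card T))
              * (if card (T_in u C) * card (T_in v C) > 0 then 1 else 0)
      | MM \<Rightarrow> deg T V E u * deg T V E v / (2 * mE E)
              * (sqrt (real (card (T_in u C)) * real (card (T_in v C))) / real (card T)))"

definition long_mod :: "null_model \<Rightarrow> real set \<Rightarrow> 'v set \<Rightarrow> ('v set \<times> real) set
                         \<Rightarrow> ('v \<times> real) set set \<Rightarrow> real \<Rightarrow> real" where
  "long_mod M T V E \<C> \<omega> =
     1 / (2 * mE E) * (\<Sum>C\<in>\<C>. \<Sum>u\<in>V. \<Sum>v\<in>V. L_in E u v C - expect M T V E u v C)
     - \<omega> / (2 * mE E) * (\<Sum>u\<in>V. real (eta \<C> u))"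

definition active :: "real set \<Rightarrow> 'v set \<Rightarrow> ('v set \<times> real) set \<Rightarrow> ('v \<times> real) set" where
  "active T V E = {(u, t). u \<in> V \<and> t \<in> T \<and> (\<exists>v\<in>V. ({u, v}, t) \<in> E)}"

definition trim_T :: "real set \<Rightarrow> 'v set \<Rightarrow> ('v set \<times> real) set \<Rightarrow> 'v \<Rightarrow> ('v \<times> real) set \<Rightarrow> real set" where
  "trim_T T V E u C =
     (let S = T_in u (C \<inter> active T V E) in
      if S = {} then {} else T_in u C \<inter> {Min S .. Max S})"

definition trim_comm :: "real set \<Rightarrow> 'v set \<Rightarrow> ('v set \<times> real) set \<Rightarrow> ('v \<times> real) set \<Rightarrow> ('v \<times> real) set" where
  "trim_comm T V E C = (\<Union>u\<in>V. {u} \<times> trim_T T V E u C)"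

definition trim_struct :: "real set \<Rightarrow> 'v set \<Rightarrow> ('v set \<times> real) set \<Rightarrow> ('v \<times> real) set set \<Rightarrow> ('v \<times> real) set set" where
  "trim_struct T V E \<C> = trim_comm T V E ` \<C>"

end

theory Submission
  imports Defs
begin

lemma T_in_trim: "T_in u (trim_comm T V E C) = (if u \<in> V then trim_T T V E u C else {})"
  unfolding T_in_def trim_comm_def by auto

lemma trim_T_sub: "trim_T T V E u C \<subseteq> T_in u C"
  unfolding trim_T_def Let_def by auto

lemma trim_comm_sub: "trim_comm T V E C \<subseteq> C"
  using trim_T_sub unfolding trim_comm_def T_in_def by fastforce

lemma in_trim:
  assumes ls: "link_stream T V E" and u: "u \<in> V" and v: "v \<in> V"
    and t: "t \<in> T_in u C" and e: "({u, v}, t) \<in> E"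
  shows "t \<in> trim_T T V E u C"
proof -
  let ?S = "T_in u (C \<inter> active T V E)"
  have tT: "t \<in> T" using ls e unfolding link_stream_def by auto
  have tS: "t \<in> ?S" using t tT u v e unfolding T_in_def active_def by auto
  have fin: "finite ?S"
    by (rule finite_subset[of _ T]) (use ls in \<open>auto simp: T_in_def active_def link_stream_def\<close>)
  have "Min ?S \<le> t" "t \<le> Max ?S" using fin tS by auto
  then show ?thesis using tS t unfolding trim_T_def Let_def by auto
qed


lemma L_in_trim:
  assumes ls: "link_stream T V E" and u: "u \<in> V" and v: "v \<in> V"
    and CT: "C \<subseteq> V \<times> T"
  shows "L_in E u v (trim_comm T V E C) = L_in E u v C"
proof -
  have fin: "finite (T_in u C \<inter> T_in v C)"
    by (rule finite_subset[of _ T]) (use ls CT in \<open>auto simp: T_in_def link_stream_def\<close>)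
  have sub: "trim_T T V E u C \<inter> trim_T T V E v C \<subseteq> T_in u C \<inter> T_in v C"
    using trim_T_sub[of T V E u C] trim_T_sub[of T V E v C] by blast
  have z: "\<forall>t \<in> T_in u C \<inter> T_in v C - trim_T T V E u C \<inter> trim_T T V E v C. ind E u v t = 0"
  proof
    fix t assume t: "t \<in> T_in u C \<inter> T_in v C - trim_T T V E u C \<inter> trim_T T V E v C"
    show "ind E u v t = 0"
    proof (rule ccontr)
      assume "ind E u v t \<noteq> 0"
      then have e: "({u, v}, t) \<in> E" by (simp add: ind_def split: if_splits)
      then have e2: "({v, u}, t) \<in> E" by (simp add: insert_commute)
      have "t \<in> trim_T T V E u C" using in_trim[OF ls u v _ e] t by auto
      moreover have "t \<in> trim_T T V E v C" using in_trim[OF ls v u _ e2] t by auto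
      ultimately show False using t by auto
    qed
  qed
  show ?thesis unfolding L_in_def Lw_def T_in_trim using u v
    by (simp add: sum.mono_neutral_left[OF fin sub z])
qed

lemma deg_nonneg: "deg T V E u \<ge> 0"
  unfolding deg_def Lw_def ind_def by (auto intro!: sum_nonneg)

lemma expect_trim:
  assumes ls: "link_stream T V E" and u: "u \<in> V" and v: "v \<in> V"
    and CT: "C \<subseteq> V \<times> T" and m: "card E > 0"
  shows "expect M T V E u v (trim_comm T V E C) \<le> expect M T V E u v C"
proof -
  have fT: "finite T" using ls by (simp add: link_stream_def)
  have finu: "finite (T_in w C)" for w
    by (rule finite_subset[of _ T]) (use fT CT in \<open>auto simp: T_in_def\<close>)
  have cu: "card (T_in w (trim_comm T V E C)) \<le> card (T_in w C)" for w
    unfolding T_in_trim using trim_T_sub[of T V E w C] finu[of w] by (auto intro: card_mono)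
  have K: "0 \<le> deg T V E u * deg T V E v / (2 * mE E)"
    using deg_nonneg[of T V E u] deg_nonneg[of T V E v] by (simp add: mE_def)
  show ?thesis
  proof (cases M)
    case JM
    have fc: "finite (T_comm V C)"
      by (rule finite_subset[of _ T]) (use fT CT in \<open>auto simp: T_comm_def T_in_def\<close>)
    have "T_comm V (trim_comm T V E C) \<subseteq> T_comm V C"
      unfolding T_comm_def using T_in_trim trim_T_sub by (metis (no_types, lifting) SUP_mono' empty_subsetI)
    then have c1: "card (T_comm V (trim_comm T V E C)) \<le> card (T_comm V C)"
      using fc card_mono by blast
    have r: "real (card (T_comm V (trim_comm T V E C))) / real (card T)
        \<le> real (card (T_comm V C)) / real (card T)"
      using c1 by (simp add: divide_right_mono)
    have i: "(if card (T_in u (trim_comm T V E C)) * card (T_in v (trim_comm T V E C)) > 0 then 1 else 0)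
       \<le> (if card (T_in u C) * card (T_in v C) > 0 then 1 else (0::real))"
      using cu[of u] cu[of v] by auto
    show ?thesis unfolding expect_def JM null_model.case
      apply (rule mult_mono[OF mult_left_mono[OF r K] i])
      using K by (auto intro!: mult_nonneg_nonneg divide_nonneg_nonneg simp del: times_divide_eq_right times_divide_eq_left)
  next
    case MM
    have r: "sqrt (real (card (T_in u (trim_comm T V E C))) * real (card (T_in v (trim_comm T V E C)))) / real (card T)
        \<le> sqrt (real (card (T_in u C)) * real (card (T_in v C))) / real (card T)"
      using cu[of u] cu[of v] by (intro divide_right_mono real_sqrt_le_mono mult_mono) auto
    show ?thesis unfolding expect_def MM null_model.case
      by (rule mult_left_mono[OF r K])
  qed
qed

theorem mainTheorem1:
  fixes T :: "real set" and V :: "'v set" and E :: "('v set \<times> real) set"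
    and \<C> :: "('v \<times> real) set set" and \<omega> :: real and M :: null_model
  assumes "link_stream T V E"
    and "card E > 0"
    and "dyn_comm_structure T V \<C>"
    and "\<omega> > 0"
  shows "long_mod M T V E (trim_struct T V E \<C>) \<omega> \<ge> long_mod M T V E \<C> \<omega>"
proof -
  note ls = assms(1)
  have fT: "finite T" and fV: "finite V" using ls by (auto simp: link_stream_def)
  have CT: "\<And>C. C \<in> \<C> \<Longrightarrow> C \<subseteq> V \<times> T" and ne: "\<And>C. C \<in> \<C> \<Longrightarrow> C \<noteq> {}"
    and dj: "\<And>C1 C2. C1 \<in> \<C> \<Longrightarrow> C2 \<in> \<C> \<Longrightarrow> C1 \<noteq> C2 \<Longrightarrow> C1 \<inter> C2 = {}"
    using assms(3) unfolding dyn_comm_structure_def by auto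
  have finC: "finite \<C>"
    by (rule finite_subset[of _ "Pow (V \<times> T)"]) (use CT fT fV in auto)
  let ?tr = "trim_comm T V E"
  define g where "g C = (\<Sum>u\<in>V. \<Sum>v\<in>V. L_in E u v C - expect M T V E u v C)" for C
  have g0: "g {} = 0"
    unfolding g_def L_in_def Lw_def T_in_def expect_def by (cases M) simp_all
  have re: "sum g (?tr ` \<C>) = sum (g \<circ> ?tr) \<C>"
  proof (rule sum.reindex_nontrivial[OF finC])
    fix x y assume xy: "x \<in> \<C>" "y \<in> \<C>" "x \<noteq> y" "?tr x = ?tr y"
    then have "?tr x = {}" using dj[of x y] trim_comm_sub[of T V E x] trim_comm_sub[of T V E y] by auto
    then show "g (?tr x) = 0" using g0 by simp
  qed
  have gle: "g C \<le> g (?tr C)" if "C \<in> \<C>" for C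
    unfolding g_def
    using L_in_trim[OF ls _ _ CT[OF that]] expect_trim[OF ls _ _ CT[OF that] assms(2)]
    by (intro sum_mono) (simp add: algebra_simps)
  have S: "sum g \<C> \<le> sum g (?tr ` \<C>)"
    unfolding re using gle by (auto intro: sum_mono)
  have eta_le: "eta (trim_struct T V E \<C>) u \<le> eta \<C> u" for u
  proof -
    let ?A = "{C \<in> \<C>. \<exists>t. (u, t) \<in> C}"
    have fA: "finite ?A" using finC by auto
    have "{C \<in> trim_struct T V E \<C>. \<exists>t. (u, t) \<in> C} \<subseteq> ?tr ` ?A"
      unfolding trim_struct_def using trim_comm_sub by fastforce
    then have "card {C \<in> trim_struct T V E \<C>. \<exists>t. (u, t) \<in> C} \<le> card ?A"
      using fA by (meson card_image_le card_mono finite_imageI le_trans)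
    then show ?thesis unfolding eta_def by simp
  qed
  have eS: "(\<Sum>u\<in>V. real (eta (trim_struct T V E \<C>) u)) \<le> (\<Sum>u\<in>V. real (eta \<C> u))"
    using eta_le by (intro sum_mono) simp
  have mpos: "mE E > 0" using assms(2) by (simp add: mE_def)
  have A: "1 / (2 * mE E) * sum g \<C> \<le> 1 / (2 * mE E) * sum g (?tr ` \<C>)"
    using S mpos by (intro mult_left_mono) auto
  have B: "\<omega> / (2 * mE E) * (\<Sum>u\<in>V. real (eta (trim_struct T V E \<C>) u))
      \<le> \<omega> / (2 * mE E) * (\<Sum>u\<in>V. real (eta \<C> u))"
    using eS mpos assms(4) by (intro mult_left_mono) auto
  show ?thesis
    unfolding long_mod_def using A B unfolding g_def trim_struct_def by linarith
qed

end
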